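(* Let $k\in\mathbb{Z}$ with $k<-2$ and put $j=k/2$. Then $D^{k,1}_0\cong D^{+,k}_{k/2}/W^+_{k/2}$ and $D^{k,-1}_0\cong D^{-,k}_{k/2}/W^-_{k/2}$, where $W^\pm_{k/2}\subset D^{\pm,k}_{k/2}$ is the $\mathcal{U}(\widehat{\mathfrak{sl}}_2)$-submodule generated by $J^\mp_{-1}(1\otimes|k/2,0\rangle_\pm)$.
   Context: $\mathfrak{sl}_2$ has basis $J^+,J^-,J^0$ with $[J^+,J^-]=J^0$, $[J^0,J^\pm]=\pm2J^\pm$. For $j\in-\tfrac12\mathbb{N}$, $D^+_j$ is the $\mathfrak{sl}_2$-module with basis $\{|j,m\rangle_+\}_{m\ge0}$, $J^0|j,m\rangle_+=2(m-j)|j,m\rangle_+$, $J^+|j,m\rangle_+=\sqrt{(m+1)(m-2j)}|j,m+1\rangle_+$, $J^-|j,m\rangle_+=-\sqrt{m(m-1-2j)}|j,m-1\rangle_+$; $D^-_j$ has basis $\{|j,m\rangle_-\}_{m\ge0}$, $J^0|j,m\rangle_-=2(j-m)|j,m\rangle_-$, $J^+|j,m\rangle_-=-\sqrt{m(m-1-2j)}|j,m-1\rangle_-$, $J^-|j,m\rangle_-=\sqrt{(m+1)(m-2j)}|j,m+1\rangle_-$; $D_0=\mathbb{C}$ is the trivial module. $\widehat{\mathfrak{sl}}_2$ has generators $J^a_n$ ($a\in\{+,-,0\}$, $n\in\mathbb{Z}$), $K$, $d$ with $[J^+_m,J^-_n]=J^0_{m+n}+Km\delta_{m+n,0}$, $[J^0_m,J^\pm_n]=\pm2J^\pm_{m+n}$,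 $[J^0_m,J^0_n]=2Km\delta_{m+n,0}$, $[J^\pm_m,J^\pm_n]=0$, $[d,J^a_n]=nJ^a_n$, $K$ central; $J^a_0$ is identified with $J^a$. With $\mathfrak{r}_+=\mathrm{span}\{J^a_n:n\ge1\}$, $\mathfrak{k}=\mathrm{span}\{J^a_0,K,d\}$, the prolongation of $V\in\{D^\pm_j,D_0\}$ at level $k\neq-2$ is $V^k=\mathcal{U}(\widehat{\mathfrak{sl}}_2)\otimes_{\mathcal{U}(\mathfrak{k}\oplus\mathfrak{r}_+)}V^{(k)}$, where on $V^{(k)}=V$ the element $K$ acts as $k$, $\mathfrak{r}_+$ as $0$, and $d$ by the scalar $-\frac{j(j+1)}{k+2}$ (for $D^\pm_j$) resp. $0$ (for $D_0$). Write $D^{\pm,k}_j=(D^\pm_j)^k$. The spectral flow automorphism $\vartheta_s$ ($s\in\mathbb{Z}$) is $J^\pm_n\mapsto J^\pm_{n\mp s}$, $J^0_n\mapsto J^0_n-sK\delta_{n,0}$, $K\mapsto K$, $d\mapsto d+\frac s2J^0_0-\frac{s^2}4K$; for a module $(W,\rho)$, $W^s=(W,\rho\circ\vartheta_s)$, and $D^{k,s}_0=((D_0)^k)^s$. *)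

theory Defs
  imports Complex_Main
begin

datatype gen = Jp int | Jm int | J0 int | Kc | Dd

text \<open>A module for the affine algebra, carried by a subspace A of an ambient complex
vector space (scalar multiplication scale), given by the action of the generators;
each generator acts linearly on A, preserves A, and the defining brackets hold on A.\<close>
definition aff_module :: "(complex \<Rightarrow> 'u::ab_group_add \<Rightarrow> 'u) \<Rightarrow> 'u set \<Rightarrow> (gen \<Rightarrow> 'u \<Rightarrow> 'u) \<Rightarrow> bool" where
  "aff_module scale A \<rho> \<longleftrightarrow>
     module.subspace scale A \<and>
     (\<forall>x. \<forall>v\<in>A. \<rho> x v \<in> A) \<and>
     (\<forall>x. \<forall>u\<in>A. \<forall>v\<in>A. \<rho> x (u + v) = \<rho> x u + \<rho> x v) \<and>
     (\<forall>x c. \<forall>v\<in>A. \<rho> x (scale c v) = scale c (\<rho> x v)) \<and>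
     (\<forall>v\<in>A. \<forall>m n.
        \<rho> (Jp m) (\<rho> (Jm n) v) - \<rho> (Jm n) (\<rho> (Jp m) v)
          = \<rho> (J0 (m + n)) v + (if m + n = 0 then scale (of_int m) (\<rho> Kc v) else 0) \<and>
        \<rho> (J0 m) (\<rho> (Jp n) v) - \<rho> (Jp n) (\<rho> (J0 m) v) = scale 2 (\<rho> (Jp (m + n)) v) \<and>
        \<rho> (J0 m) (\<rho> (Jm n) v) - \<rho> (Jm n) (\<rho> (J0 m) v) = scale (-2) (\<rho> (Jm (m + n)) v) \<and>
        \<rho> (J0 m) (\<rho> (J0 n) v) - \<rho> (J0 n) (\<rho> (J0 m) v)
          = (if m + n = 0 then scale (2 * of_int m) (\<rho> Kc v) else 0) \<and>
        \<rho> (Jp m) (\<rho> (Jp n) v) = \<rho> (Jp n) (\<rho> (Jp m) v) \<and>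
        \<rho> (Jm m) (\<rho> (Jm n) v) = \<rho> (Jm n) (\<rho> (Jm m) v)) \<and>
     (\<forall>v\<in>A. \<forall>n.
        \<rho> Dd (\<rho> (Jp n) v) - \<rho> (Jp n) (\<rho> Dd v) = scale (of_int n) (\<rho> (Jp n) v) \<and>
        \<rho> Dd (\<rho> (Jm n) v) - \<rho> (Jm n) (\<rho> Dd v) = scale (of_int n) (\<rho> (Jm n) v) \<and>
        \<rho> Dd (\<rho> (J0 n) v) - \<rho> (J0 n) (\<rho> Dd v) = scale (of_int n) (\<rho> (J0 n) v)) \<and>
     (\<forall>v\<in>A. \<forall>x. \<rho> Kc (\<rho> x v) = \<rho> x (\<rho> Kc v))"

definition aff_hom :: "(complex \<Rightarrow> 'u::ab_group_add \<Rightarrow> 'u) \<Rightarrow> 'u set \<Rightarrow> (gen \<Rightarrow> 'u \<Rightarrow> 'u)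
     \<Rightarrow> 'u set \<Rightarrow> (gen \<Rightarrow> 'u \<Rightarrow> 'u) \<Rightarrow> ('u \<Rightarrow> 'u) \<Rightarrow> bool" where
  "aff_hom scale A \<rho> B \<sigma> \<phi> \<longleftrightarrow>
     (\<forall>v\<in>A. \<phi> v \<in> B) \<and>
     (\<forall>u\<in>A. \<forall>v\<in>A. \<phi> (u + v) = \<phi> u + \<phi> v) \<and>
     (\<forall>c. \<forall>v\<in>A. \<phi> (scale c v) = scale c (\<phi> v)) \<and>
     (\<forall>x. \<forall>v\<in>A. \<phi> (\<rho> x v) = \<sigma> x (\<phi> v))"

definition gen_submodule :: "(complex \<Rightarrow> 'u::ab_group_add \<Rightarrow> 'u) \<Rightarrow> 'u set \<Rightarrow> (gen \<Rightarrow> 'u \<Rightarrow> 'u) \<Rightarrow> 'u \<Rightarrow> 'u set" where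
  "gen_submodule scale A \<rho> w =
     \<Inter>{S. S \<subseteq> A \<and> module.subspace scale S \<and> (\<forall>x. \<forall>v\<in>S. \<rho> x v \<in> S) \<and> w \<in> S}"

text \<open>Conditions saying that the vectors f m (m in nat) transform, under the subalgebra
k + r_+, as the basis vectors |j,m>_+ of D^+_j inside the level-k prolongation:
J^a_0 acts as on D^+_j, K acts by k, J^a_n (n >= 1) act by 0, d by -j(j+1)/(k+2).\<close>
definition rel_Dplus :: "(complex \<Rightarrow> 'u::ab_group_add \<Rightarrow> 'u) \<Rightarrow> real \<Rightarrow> int
     \<Rightarrow> (gen \<Rightarrow> 'u \<Rightarrow> 'u) \<Rightarrow> (nat \<Rightarrow> 'u) \<Rightarrow> bool" where
  "rel_Dplus scale j k \<rho> f \<longleftrightarrow> (\<forall>m::nat.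
     \<rho> (J0 0) (f m) = scale (of_real (2 * (real m - j))) (f m) \<and>
     \<rho> (Jp 0) (f m) = scale (of_real (sqrt ((real m + 1) * (real m - 2 * j)))) (f (m + 1)) \<and>
     \<rho> (Jm 0) (f m) = scale (of_real (- sqrt (real m * (real m - 1 - 2 * j)))) (f (m - 1)) \<and>
     \<rho> Kc (f m) = scale (of_int k) (f m) \<and>
     (\<forall>n\<ge>1. \<rho> (Jp n) (f m) = 0 \<and> \<rho> (Jm n) (f m) = 0 \<and> \<rho> (J0 n) (f m) = 0) \<and>
     \<rho> Dd (f m) = scale (of_real (- (j * (j + 1) / (real_of_int k + 2)))) (f m))"

definition rel_Dminus :: "(complex \<Rightarrow> 'u::ab_group_add \<Rightarrow> 'u) \<Rightarrow> real \<Rightarrow> int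
     \<Rightarrow> (gen \<Rightarrow> 'u \<Rightarrow> 'u) \<Rightarrow> (nat \<Rightarrow> 'u) \<Rightarrow> bool" where
  "rel_Dminus scale j k \<rho> f \<longleftrightarrow> (\<forall>m::nat.
     \<rho> (J0 0) (f m) = scale (of_real (2 * (j - real m))) (f m) \<and>
     \<rho> (Jp 0) (f m) = scale (of_real (- sqrt (real m * (real m - 1 - 2 * j)))) (f (m - 1)) \<and>
     \<rho> (Jm 0) (f m) = scale (of_real (sqrt ((real m + 1) * (real m - 2 * j)))) (f (m + 1)) \<and>
     \<rho> Kc (f m) = scale (of_int k) (f m) \<and>
     (\<forall>n\<ge>1. \<rho> (Jp n) (f m) = 0 \<and> \<rho> (Jm n) (f m) = 0 \<and> \<rho> (J0 n) (f m) = 0) \<and>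
     \<rho> Dd (f m) = scale (of_real (- (j * (j + 1) / (real_of_int k + 2)))) (f m))"

definition rel_D0 :: "(complex \<Rightarrow> 'u::ab_group_add \<Rightarrow> 'u) \<Rightarrow> int
     \<Rightarrow> (gen \<Rightarrow> 'u \<Rightarrow> 'u) \<Rightarrow> (unit \<Rightarrow> 'u) \<Rightarrow> bool" where
  "rel_D0 scale k \<rho> f \<longleftrightarrow> (\<forall>i.
     (\<forall>n\<ge>0. \<rho> (Jp n) (f i) = 0 \<and> \<rho> (Jm n) (f i) = 0 \<and> \<rho> (J0 n) (f i) = 0) \<and>
     \<rho> Kc (f i) = scale (of_int k) (f i) \<and>
     \<rho> Dd (f i) = 0)"

text \<open>(A, rho) with the family e (images of the basis of V^(k)) is the prolongation
U(g) \<otimes>_{U(k + r_+)} V^(k): characterized by its universal property as the induced module,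
with respect to all modules carried by subspaces of the ambient space.\<close>
definition is_prolongation :: "(complex \<Rightarrow> 'u::ab_group_add \<Rightarrow> 'u) \<Rightarrow> 'u set \<Rightarrow> (gen \<Rightarrow> 'u \<Rightarrow> 'u)
     \<Rightarrow> ('i \<Rightarrow> 'u) \<Rightarrow> ((gen \<Rightarrow> 'u \<Rightarrow> 'u) \<Rightarrow> ('i \<Rightarrow> 'u) \<Rightarrow> bool) \<Rightarrow> bool" where
  "is_prolongation scale A \<rho> e R \<longleftrightarrow>
     aff_module scale A \<rho> \<and> (\<forall>i. e i \<in> A) \<and> R \<rho> e \<and>
     (\<forall>B \<sigma> f. aff_module scale B \<sigma> \<and> (\<forall>i. f i \<in> B) \<and> R \<sigma> f \<longrightarrow>
        (\<exists>\<phi>. aff_hom scale A \<rho> B \<sigma> \<phi> \<and> (\<forall>i. \<phi> (e i) = f i)) \<and>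
        (\<forall>\<phi> \<psi>. aff_hom scale A \<rho> B \<sigma> \<phi> \<and> (\<forall>i. \<phi> (e i) = f i) \<and>
                aff_hom scale A \<rho> B \<sigma> \<psi> \<and> (\<forall>i. \<psi> (e i) = f i) \<longrightarrow>
                (\<forall>v\<in>A. \<phi> v = \<psi> v)))"

definition spectral_flow :: "(complex \<Rightarrow> 'u::ab_group_add \<Rightarrow> 'u) \<Rightarrow> int \<Rightarrow> (gen \<Rightarrow> 'u \<Rightarrow> 'u) \<Rightarrow> gen \<Rightarrow> 'u \<Rightarrow> 'u" where
  "spectral_flow scale s \<rho> x v = (case x of
      Jp n \<Rightarrow> \<rho> (Jp (n - s)) v
    | Jm n \<Rightarrow> \<rho> (Jm (n + s)) v
    | J0 n \<Rightarrow> \<rho> (J0 n) v - (if n = 0 then scale (of_int s) (\<rho> Kc v) else 0)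
    | Kc \<Rightarrow> \<rho> Kc v
    | Dd \<Rightarrow> \<rho> Dd v + scale (of_int s / 2) (\<rho> (J0 0) v) - scale ((of_int s)\<^sup>2 / 4) (\<rho> Kc v))"

end

theory Submission
  imports Defs
begin



locale vsp = vector_space scale for scale :: "complex \<Rightarrow> 'u::ab_group_add \<Rightarrow> 'u"

locale affm = vsp scale for scale :: "complex \<Rightarrow> 'u::ab_group_add \<Rightarrow> 'u" +
  fixes A :: "'u set" and \<rho> :: "gen \<Rightarrow> 'u \<Rightarrow> 'u"
  assumes am: "aff_module scale A \<rho>"
begin

lemma sub: "subspace A" using am unfolding aff_module_def by blast
lemma cl[simp]: "v \<in> A \<Longrightarrow> \<rho> x v \<in> A" using am unfolding aff_module_def by blast
lemma zA[simp]: "0 \<in> A" using sub subspace_0 by blast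
lemma addA[simp]: "u \<in> A \<Longrightarrow> v \<in> A \<Longrightarrow> u + v \<in> A" using sub subspace_add by blast
lemma scaleA[simp]: "v \<in> A \<Longrightarrow> scale c v \<in> A" using sub subspace_scale by blast
lemma negA[simp]: "v \<in> A \<Longrightarrow> - v \<in> A" using sub subspace_neg by blast
lemma diffA[simp]: "u \<in> A \<Longrightarrow> v \<in> A \<Longrightarrow> u - v \<in> A" using sub subspace_diff by blast
lemma radd[simp]: "u \<in> A \<Longrightarrow> v \<in> A \<Longrightarrow> \<rho> x (u + v) = \<rho> x u + \<rho> x v"
  using am unfolding aff_module_def by blast
lemma rscale[simp]: "v \<in> A \<Longrightarrow> \<rho> x (scale c v) = scale c (\<rho> x v)"
  using am unfolding aff_module_def by blast
lemma rzero[simp]: "\<rho> x 0 = 0"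
  using rscale[of 0 x 0] by simp
lemma rneg[simp]: "v \<in> A \<Longrightarrow> \<rho> x (- v) = - \<rho> x v"
  using rscale[of v x "-1"] by simp
lemma rdiff[simp]: "u \<in> A \<Longrightarrow> v \<in> A \<Longrightarrow> \<rho> x (u - v) = \<rho> x u - \<rho> x v"
  using radd[of u "-v" x] rneg[of v x] by (simp only: diff_conv_add_uminus negA)

lemma brs: "v \<in> A \<Longrightarrow>
        \<rho> (Jp m) (\<rho> (Jm n) v) - \<rho> (Jm n) (\<rho> (Jp m) v)
          = \<rho> (J0 (m + n)) v + (if m + n = 0 then scale (of_int m) (\<rho> Kc v) else 0) \<and>
        \<rho> (J0 m) (\<rho> (Jp n) v) - \<rho> (Jp n) (\<rho> (J0 m) v) = scale 2 (\<rho> (Jp (m + n)) v) \<and>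
        \<rho> (J0 m) (\<rho> (Jm n) v) - \<rho> (Jm n) (\<rho> (J0 m) v) = scale (-2) (\<rho> (Jm (m + n)) v) \<and>
        \<rho> (J0 m) (\<rho> (J0 n) v) - \<rho> (J0 n) (\<rho> (J0 m) v)
          = (if m + n = 0 then scale (2 * of_int m) (\<rho> Kc v) else 0) \<and>
        \<rho> (Jp m) (\<rho> (Jp n) v) = \<rho> (Jp n) (\<rho> (Jp m) v) \<and>
        \<rho> (Jm m) (\<rho> (Jm n) v) = \<rho> (Jm n) (\<rho> (Jm m) v) \<and>
        \<rho> Dd (\<rho> (Jp n) v) - \<rho> (Jp n) (\<rho> Dd v) = scale (of_int n) (\<rho> (Jp n) v) \<and>
        \<rho> Dd (\<rho> (Jm n) v) - \<rho> (Jm n) (\<rho> Dd v) = scale (of_int n) (\<rho> (Jm n) v) \<and>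
        \<rho> Dd (\<rho> (J0 n) v) - \<rho> (J0 n) (\<rho> Dd v) = scale (of_int n) (\<rho> (J0 n) v) \<and>
        \<rho> Kc (\<rho> x v) = \<rho> x (\<rho> Kc v)"
  using am unfolding aff_module_def by blast

lemma br_pm: "v \<in> A \<Longrightarrow> \<rho> (Jp m) (\<rho> (Jm n) v) = \<rho> (Jm n) (\<rho> (Jp m) v) +
   (\<rho> (J0 (m + n)) v + (if m + n = 0 then scale (of_int m) (\<rho> Kc v) else 0))"
  using brs[of v m n] brs[of v n n] by (simp add: diff_eq_eq add.commute)
lemma br_0p: "v \<in> A \<Longrightarrow> \<rho> (J0 m) (\<rho> (Jp n) v) = \<rho> (Jp n) (\<rho> (J0 m) v) + scale 2 (\<rho> (Jp (m + n)) v)"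
  using brs[of v m n] brs[of v n n] by (simp add: diff_eq_eq add.commute)
lemma br_0m: "v \<in> A \<Longrightarrow> \<rho> (J0 m) (\<rho> (Jm n) v) = \<rho> (Jm n) (\<rho> (J0 m) v) + scale (-2) (\<rho> (Jm (m + n)) v)"
  using brs[of v m n] brs[of v n n] by (simp add: diff_eq_eq add.commute)
lemma br_00: "v \<in> A \<Longrightarrow> \<rho> (J0 m) (\<rho> (J0 n) v) = \<rho> (J0 n) (\<rho> (J0 m) v) + (if m + n = 0 then scale (2 * of_int m) (\<rho> Kc v) else 0)"
  using brs[of v m n] brs[of v n n] by (simp add: diff_eq_eq add.commute)
lemma br_pp: "v \<in> A \<Longrightarrow> \<rho> (Jp m) (\<rho> (Jp n) v) = \<rho> (Jp n) (\<rho> (Jp m) v)"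
  using brs[of v m n] by blast
lemma br_mm: "v \<in> A \<Longrightarrow> \<rho> (Jm m) (\<rho> (Jm n) v) = \<rho> (Jm n) (\<rho> (Jm m) v)"
  using brs[of v m n] by blast
lemma br_dp: "v \<in> A \<Longrightarrow> \<rho> Dd (\<rho> (Jp n) v) = \<rho> (Jp n) (\<rho> Dd v) + scale (of_int n) (\<rho> (Jp n) v)"
  using brs[of v m n] brs[of v n n] by (simp add: diff_eq_eq add.commute)
lemma br_dm: "v \<in> A \<Longrightarrow> \<rho> Dd (\<rho> (Jm n) v) = \<rho> (Jm n) (\<rho> Dd v) + scale (of_int n) (\<rho> (Jm n) v)"
  using brs[of v m n] brs[of v n n] by (simp add: diff_eq_eq add.commute)
lemma br_d0: "v \<in> A \<Longrightarrow> \<rho> Dd (\<rho> (J0 n) v) = \<rho> (J0 n) (\<rho> Dd v) + scale (of_int n) (\<rho> (J0 n) v)"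
  using brs[of v m n] brs[of v n n] by (simp add: diff_eq_eq add.commute)
lemma br_K: "v \<in> A \<Longrightarrow> \<rho> Kc (\<rho> x v) = \<rho> x (\<rho> Kc v)"
  using brs[of v 0 0 x] by blast

end



lemma sf_simps[simp]:
  "spectral_flow scale s \<rho> (Jp n) v = \<rho> (Jp (n - s)) v"
  "spectral_flow scale s \<rho> (Jm n) v = \<rho> (Jm (n + s)) v"
  "spectral_flow scale s \<rho> (J0 n) v = \<rho> (J0 n) v - (if n = 0 then scale (of_int s) (\<rho> Kc v) else 0)"
  "spectral_flow scale s \<rho> Kc v = \<rho> Kc v"
  "spectral_flow scale s \<rho> Dd v = \<rho> Dd v + scale (of_int s / 2) (\<rho> (J0 0) v) - scale ((of_int s)\<^sup>2 / 4) (\<rho> Kc v)"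
  by (simp_all add: spectral_flow_def)

context affm begin

lemma flow_module: "aff_module scale A (spectral_flow scale s \<rho>)"
proof -
  let ?f = "spectral_flow scale s \<rho>"
  have c1: "\<forall>x. \<forall>v\<in>A. ?f x v \<in> A"
  proof (intro allI ballI)
    fix x v assume "v \<in> A" then show "?f x v \<in> A" by (cases x) auto
  qed
  have c2: "\<forall>x. \<forall>u\<in>A. \<forall>v\<in>A. ?f x (u + v) = ?f x u + ?f x v"
  proof (intro allI ballI)
    fix x u v assume "u \<in> A" "v \<in> A" then show "?f x (u + v) = ?f x u + ?f x v"
      by (cases x) (auto simp: algebra_simps)
  qed
  have c3: "\<forall>x c. \<forall>v\<in>A. ?f x (scale c v) = scale c (?f x v)"
  proof (intro allI ballI)
    fix x c v assume "v \<in> A" then show "?f x (scale c v) = scale c (?f x v)"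
      by (cases x) (auto simp: algebra_simps scale_left_commute)
  qed
  have c4: "\<forall>v\<in>A. \<forall>m n.
        ?f (Jp m) (?f (Jm n) v) - ?f (Jm n) (?f (Jp m) v)
          = ?f (J0 (m + n)) v + (if m + n = 0 then scale (of_int m) (?f Kc v) else 0) \<and>
        ?f (J0 m) (?f (Jp n) v) - ?f (Jp n) (?f (J0 m) v) = scale 2 (?f (Jp (m + n)) v) \<and>
        ?f (J0 m) (?f (Jm n) v) - ?f (Jm n) (?f (J0 m) v) = scale (-2) (?f (Jm (m + n)) v) \<and>
        ?f (J0 m) (?f (J0 n) v) - ?f (J0 n) (?f (J0 m) v)
          = (if m + n = 0 then scale (2 * of_int m) (?f Kc v) else 0) \<and>
        ?f (Jp m) (?f (Jp n) v) = ?f (Jp n) (?f (Jp m) v) \<and>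
        ?f (Jm m) (?f (Jm n) v) = ?f (Jm n) (?f (Jm m) v)"
  proof (intro ballI allI conjI)
    fix v m n assume v: "v \<in> A"
    show "?f (Jp m) (?f (Jm n) v) - ?f (Jm n) (?f (Jp m) v)
          = ?f (J0 (m + n)) v + (if m + n = 0 then scale (of_int m) (?f Kc v) else 0)"
      using br_pm[OF v, of "m - s" "n + s"] by (cases "m + n = 0") (simp_all add: algebra_simps)
    show "?f (J0 m) (?f (Jp n) v) - ?f (Jp n) (?f (J0 m) v) = scale 2 (?f (Jp (m + n)) v)"
      using br_0p[OF v, of m "n - s"] br_K[OF v, of "Jp (n - s)"] v
      by (cases "m = 0") (simp_all add: algebra_simps)
    show "?f (J0 m) (?f (Jm n) v) - ?f (Jm n) (?f (J0 m) v) = scale (-2) (?f (Jm (m + n)) v)"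
      using br_0m[OF v, of m "n + s"] br_K[OF v, of "Jm (n + s)"] v
      by (cases "m = 0") (simp_all add: algebra_simps)
    show "?f (J0 m) (?f (J0 n) v) - ?f (J0 n) (?f (J0 m) v)
          = (if m + n = 0 then scale (2 * of_int m) (?f Kc v) else 0)"
      using br_00[OF v, of m n] br_K[OF v, of "J0 n"] br_K[OF v, of "J0 m"] v
      by (cases "m = 0"; cases "n = 0") (simp_all add: algebra_simps)
    show "?f (Jp m) (?f (Jp n) v) = ?f (Jp n) (?f (Jp m) v)"
      using br_pp[OF v] by simp
    show "?f (Jm m) (?f (Jm n) v) = ?f (Jm n) (?f (Jm m) v)"
      using br_mm[OF v] by simp
  qed
  have c5: "\<forall>v\<in>A. \<forall>n.
        ?f Dd (?f (Jp n) v) - ?f (Jp n) (?f Dd v) = scale (of_int n) (?f (Jp n) v) \<and>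
        ?f Dd (?f (Jm n) v) - ?f (Jm n) (?f Dd v) = scale (of_int n) (?f (Jm n) v) \<and>
        ?f Dd (?f (J0 n) v) - ?f (J0 n) (?f Dd v) = scale (of_int n) (?f (J0 n) v)"
  proof (intro ballI allI conjI)
    fix v n assume v: "v \<in> A"
    show "?f Dd (?f (Jp n) v) - ?f (Jp n) (?f Dd v) = scale (of_int n) (?f (Jp n) v)"
      using br_dp[OF v, of "n - s"] br_0p[OF v, of 0 "n - s"] br_K[OF v, of "Jp (n - s)"] v
      by (simp add: algebra_simps)
    show "?f Dd (?f (Jm n) v) - ?f (Jm n) (?f Dd v) = scale (of_int n) (?f (Jm n) v)"
      using v by (simp add: algebra_simps br_dm[OF v] br_0m[OF v] br_K[OF v, of "Jm (n + s)"])
    show "?f Dd (?f (J0 n) v) - ?f (J0 n) (?f Dd v) = scale (of_int n) (?f (J0 n) v)"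
      using br_d0[OF v, of n] br_00[OF v, of 0 n] br_K[OF v, of "J0 n"] br_K[OF v, of "Dd"] br_K[OF v, of "J0 0"] v
      by (cases "n = 0") (simp_all add: algebra_simps)
  qed
  have c6: "\<forall>v\<in>A. \<forall>x. ?f Kc (?f x v) = ?f x (?f Kc v)"
  proof (intro ballI allI)
    fix v x assume v: "v \<in> A"
    show "?f Kc (?f x v) = ?f x (?f Kc v)"
    proof (cases x)
      case (Jp n) then show ?thesis using br_K[OF v, of "Jp (n - s)"] by simp
    next
      case (Jm n) then show ?thesis using br_K[OF v, of "Jm (n + s)"] by simp
    next
      case (J0 n) then show ?thesis using br_K[OF v, of "J0 n"] v by simp
    next
      case Kc then show ?thesis by simp
    next
      case Dd then show ?thesis using br_K[OF v, of "J0 0"] br_K[OF v, of "Dd"] v by (simp add: algebra_simps)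
    qed
  qed
  show ?thesis unfolding aff_module_def using sub c1 c2 c3 c4 c5 c6 by blast
qed

end



context vsp begin

lemma flow_inv1: "spectral_flow scale 1 (spectral_flow scale (-1) q) = q"
proof (intro ext)
  fix x v show "spectral_flow scale 1 (spectral_flow scale (-1) q) x v = q x v"
    apply (cases x) apply (simp_all add: algebra_simps)
    by (simp add: scale_left_distrib[symmetric])
qed

lemma flow_inv2: "spectral_flow scale (-1) (spectral_flow scale 1 q) = q"
proof (intro ext)
  fix x v show "spectral_flow scale (-1) (spectral_flow scale 1 q) x v = q x v"
    apply (cases x) apply (simp_all add: algebra_simps)
    by (simp add: scale_left_distrib[symmetric])
qed

lemma hom_comp:
  assumes "aff_hom scale A \<rho> B \<sigma> \<phi>" "aff_hom scale B \<sigma> C \<tau> \<psi>"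
  shows "aff_hom scale A \<rho> C \<tau> (\<lambda>x. \<psi> (\<phi> x))"
  using assms unfolding aff_hom_def by simp

lemma hom_id: "aff_module scale A \<rho> \<Longrightarrow> aff_hom scale A \<rho> A \<rho> (\<lambda>x. x)"
  unfolding aff_hom_def aff_module_def by blast

lemma complement:
  assumes S: "subspace S" and A: "subspace A" and SA: "S \<subseteq> A"
  shows "\<exists>T. subspace T \<and> T \<subseteq> A \<and> (\<forall>x\<in>S. x \<in> T \<longrightarrow> x = 0) \<and> (\<forall>u\<in>A. \<exists>s\<in>S. \<exists>t\<in>T. u = s + t)"
proof -
  obtain BS where BS: "BS \<subseteq> S" "independent BS" "S \<subseteq> span BS"
    by (rule maximal_independent_subset)
  obtain BA where BA: "BS \<subseteq> BA" "BA \<subseteq> A" "independent BA" "A \<subseteq> span BA"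
    by (rule maximal_independent_subset_extend[OF order_trans[OF BS(1) SA] BS(2)])
  have spS: "span BS = S" using BS S span_minimal by blast
  define T where "T = span (BA - BS)"
  have "subspace T" unfolding T_def by simp
  moreover have "T \<subseteq> A" unfolding T_def using BA A span_minimal[of "BA - BS" A] by blast
  moreover have "\<forall>x\<in>S. x \<in> T \<longrightarrow> x = 0"
  proof (intro ballI impI)
    fix x assume xS: "x \<in> S" and xT: "x \<in> T"
    have "x \<in> span BS" using xS spS by simp
    then have "\<exists>t r. finite t \<and> t \<subseteq> BS \<and> (\<Sum>a\<in>t. scale (r a) a) = x"
      unfolding span_explicit by auto
    then obtain t1 r1 where t1: "finite t1" "t1 \<subseteq> BS" "(\<Sum>a\<in>t1. scale (r1 a) a) = x"
      by blast
    have "\<exists>t r. finite t \<and> t \<subseteq> BA - BS \<and> (\<Sum>a\<in>t. scale (r a) a) = x"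
      using xT unfolding T_def span_explicit by auto
    then obtain t2 r2 where t2: "finite t2" "t2 \<subseteq> BA - BS" "(\<Sum>a\<in>t2. scale (r2 a) a) = x"
      by blast
    define u where "u a = (if a \<in> t1 then r1 a else - r2 a)" for a
    have disj: "t1 \<inter> t2 = {}" using t1 t2 by blast
    have "(\<Sum>a\<in>t1 \<union> t2. scale (u a) a) = (\<Sum>a\<in>t1. scale (u a) a) + (\<Sum>a\<in>t2. scale (u a) a)"
      using t1 t2 disj by (simp add: sum.union_disjoint)
    also have "(\<Sum>a\<in>t1. scale (u a) a) = x" using t1 by (simp add: u_def)
    also have "(\<Sum>a\<in>t2. scale (u a) a) = (\<Sum>a\<in>t2. - scale (r2 a) a)"
      using disj by (intro sum.cong) (auto simp: u_def)
    also have "\<dots> = - x" using t2 by (simp add: sum_negf)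
    finally have z: "(\<Sum>a\<in>t1 \<union> t2. scale (u a) a) = 0" by simp
    have "\<forall>a\<in>t1. r1 a = 0"
    proof
      fix a assume a: "a \<in> t1"
      have "u a = 0" using independentD[OF BA(3), of "t1 \<union> t2" u a] z t1 t2 BA a by auto
      then show "r1 a = 0" using a by (simp add: u_def)
    qed
    then show "x = 0" using t1 by simp
  qed
  moreover have "\<forall>u\<in>A. \<exists>s\<in>S. \<exists>t\<in>T. u = s + t"
  proof
    fix u assume "u \<in> A"
    then have "u \<in> span (BS \<union> (BA - BS))" using BA by (metis Un_Diff_cancel sup.absorb2 subsetD)
    then show "\<exists>s\<in>S. \<exists>t\<in>T. u = s + t" unfolding span_Un T_def spS by blast
  qed
  ultimately show ?thesis by blast
qed

end

context affm begin

lemma quotient: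
  assumes S: "subspace S" and SA: "S \<subseteq> A" and Scl: "\<And>x u. u \<in> S \<Longrightarrow> \<rho> x u \<in> S"
  shows "\<exists>T p. T \<subseteq> A \<and> aff_module scale T (\<lambda>x t. p (\<rho> x t)) \<and> aff_hom scale A \<rho> T (\<lambda>x t. p (\<rho> x t)) p
           \<and> (\<forall>u\<in>A. p u = 0 \<longleftrightarrow> u \<in> S) \<and> (\<forall>t\<in>T. p t = t) \<and> (\<forall>u\<in>A. u - p u \<in> S)"
proof -
  obtain T where T: "subspace T" "T \<subseteq> A" "\<And>x. x \<in> S \<Longrightarrow> x \<in> T \<Longrightarrow> x = 0"
    "\<And>u. u \<in> A \<Longrightarrow> \<exists>s\<in>S. \<exists>t\<in>T. u = s + t"
    using complement[OF S sub SA] by blast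
  define p where "p u = (THE t. t \<in> T \<and> u - t \<in> S)" for u
  have uniq: "t1 = t2" if "t1 \<in> T" "u - t1 \<in> S" "t2 \<in> T" "u - t2 \<in> S" for u t1 t2
  proof -
    have "(u - t2) - (u - t1) \<in> S" using that S subspace_diff by blast
    moreover have "(u - t2) - (u - t1) = t1 - t2" by simp
    moreover have "t1 - t2 \<in> T" using that T(1) subspace_diff by blast
    ultimately show ?thesis using T(3) by fastforce
  qed
  have pchar: "p u = t" if "t \<in> T" "u - t \<in> S" for u t
    unfolding p_def using that uniq by blast
  have pin: "p u \<in> T \<and> u - p u \<in> S" if uA: "u \<in> A" for u
  proof -
    obtain s t where st: "s \<in> S" "t \<in> T" "u = s + t" using T(4)[OF uA] by blast
    then have "u - t \<in> S" by simp
    with st pchar show ?thesis by auto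
  qed
  have TA: "t \<in> A" if "t \<in> T" for t using that T(2) by blast
  have SA': "s \<in> A" if "s \<in> S" for s using that SA by blast
  have padd: "p (u + v) = p u + p v" if "u \<in> A" "v \<in> A" for u v
  proof (rule pchar)
    show "p u + p v \<in> T" using pin that T(1) subspace_add by blast
    have "u + v - (p u + p v) = (u - p u) + (v - p v)" by simp
    then show "u + v - (p u + p v) \<in> S" using pin that S subspace_add by metis
  qed
  have pscale: "p (scale c u) = scale c (p u)" if "u \<in> A" for u c
  proof (rule pchar)
    show "scale c (p u) \<in> T" using pin that T(1) subspace_scale by blast
    have "scale c u - scale c (p u) = scale c (u - p u)" by (simp add: scale_right_diff_distrib)
    then show "scale c u - scale c (p u) \<in> S" using pin that S subspace_scale by metis
  qed
  have pzero: "p 0 = 0" using pscale[of 0 0] by simp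
  have pdiff: "p (u - v) = p u - p v" if "u \<in> A" "v \<in> A" for u v
    using padd[of "u - v" v] that by (simp add: eq_diff_eq)
  have pT: "p t = t" if "t \<in> T" for t using pchar[OF that] S subspace_0 by simp
  have p0: "p u = 0 \<longleftrightarrow> u \<in> S" if "u \<in> A" for u
    using pin[OF that] pchar[of 0 u] T(1) subspace_0 by auto
  have key: "p (\<rho> x (p u)) = p (\<rho> x u)" if "u \<in> A" for u x
  proof -
    have pu: "p u \<in> A" using pin that TA by blast
    have e: "\<rho> x u = \<rho> x (p u) + \<rho> x (u - p u)" using that pu by simp
    have z: "p (\<rho> x (u - p u)) = 0" using p0 pin that Scl SA' by auto
    have "p (\<rho> x u) = p (\<rho> x (p u)) + p (\<rho> x (u - p u))"
      using e padd[of "\<rho> x (p u)" "\<rho> x (u - p u)"] pu that by (metis cl diffA)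
    then show ?thesis using z by simp
  qed
  define q where "q x t = p (\<rho> x t)" for x t
  have qq: "q x (q y t) = p (\<rho> x (\<rho> y t))" if "t \<in> A" for x y t
    unfolding q_def using key that by simp
  have hom: "aff_hom scale A \<rho> T q p"
    unfolding aff_hom_def q_def using pin padd pscale key by auto
  have qcl: "\<forall>x. \<forall>v\<in>T. q x v \<in> T" unfolding q_def using pin TA by auto
  have qadd: "\<forall>x. \<forall>u\<in>T. \<forall>v\<in>T. q x (u + v) = q x u + q x v" unfolding q_def using padd TA by auto
  have qscale: "\<forall>x c. \<forall>v\<in>T. q x (scale c v) = scale c (q x v)" unfolding q_def using pscale TA by auto
  have pneg: "p (- u) = - p u" if "u \<in> A" for u using pscale[OF that, of "-1"] by simp
  note plin = padd pdiff pscale pzero pneg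
  have c4: "\<forall>v\<in>T. \<forall>m n.
        q (Jp m) (q (Jm n) v) - q (Jm n) (q (Jp m) v)
          = q (J0 (m + n)) v + (if m + n = 0 then scale (of_int m) (q Kc v) else 0) \<and>
        q (J0 m) (q (Jp n) v) - q (Jp n) (q (J0 m) v) = scale 2 (q (Jp (m + n)) v) \<and>
        q (J0 m) (q (Jm n) v) - q (Jm n) (q (J0 m) v) = scale (-2) (q (Jm (m + n)) v) \<and>
        q (J0 m) (q (J0 n) v) - q (J0 n) (q (J0 m) v)
          = (if m + n = 0 then scale (2 * of_int m) (q Kc v) else 0) \<and>
        q (Jp m) (q (Jp n) v) = q (Jp n) (q (Jp m) v) \<and>
        q (Jm m) (q (Jm n) v) = q (Jm n) (q (Jm m) v)"
  proof (intro ballI allI conjI)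
    fix v m n assume "v \<in> T" then have v: "v \<in> A" by (rule TA)
    note bb = brs[OF v, of m n]
    show "q (Jp m) (q (Jm n) v) - q (Jm n) (q (Jp m) v)
          = q (J0 (m + n)) v + (if m + n = 0 then scale (of_int m) (q Kc v) else 0)"
      using arg_cong[OF bb[THEN conjunct1], of p] v
      by (cases "m + n = 0") (simp_all add: q_def plin key)
    show "q (J0 m) (q (Jp n) v) - q (Jp n) (q (J0 m) v) = scale 2 (q (Jp (m + n)) v)"
      using arg_cong[OF bb[THEN conjunct2, THEN conjunct1], of p] v
      by (simp add: q_def plin key)
    show "q (J0 m) (q (Jm n) v) - q (Jm n) (q (J0 m) v) = scale (-2) (q (Jm (m + n)) v)"
      using arg_cong[OF bb[THEN conjunct2, THEN conjunct2, THEN conjunct1], of p] v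
      by (simp add: q_def plin key)
    show "q (J0 m) (q (J0 n) v) - q (J0 n) (q (J0 m) v)
          = (if m + n = 0 then scale (2 * of_int m) (q Kc v) else 0)"
      using arg_cong[OF bb[THEN conjunct2, THEN conjunct2, THEN conjunct2, THEN conjunct1], of p] v
      by (cases "m + n = 0") (simp_all add: q_def plin key)
    show "q (Jp m) (q (Jp n) v) = q (Jp n) (q (Jp m) v)"
      using br_pp[OF v] v by (simp add: q_def key)
    show "q (Jm m) (q (Jm n) v) = q (Jm n) (q (Jm m) v)"
      using br_mm[OF v] v by (simp add: q_def key)
  qed
  have c5: "\<forall>v\<in>T. \<forall>n.
        q Dd (q (Jp n) v) - q (Jp n) (q Dd v) = scale (of_int n) (q (Jp n) v) \<and>
        q Dd (q (Jm n) v) - q (Jm n) (q Dd v) = scale (of_int n) (q (Jm n) v) \<and>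
        q Dd (q (J0 n) v) - q (J0 n) (q Dd v) = scale (of_int n) (q (J0 n) v)"
  proof (intro ballI allI conjI)
    fix v n assume "v \<in> T" then have v: "v \<in> A" by (rule TA)
    note bb = brs[OF v, of n n]
    show "q Dd (q (Jp n) v) - q (Jp n) (q Dd v) = scale (of_int n) (q (Jp n) v)"
      using arg_cong[OF bb[THEN conjunct2, THEN conjunct2, THEN conjunct2, THEN conjunct2,
        THEN conjunct2, THEN conjunct2, THEN conjunct1], of p] v
      by (simp add: q_def plin key)
    show "q Dd (q (Jm n) v) - q (Jm n) (q Dd v) = scale (of_int n) (q (Jm n) v)"
      using arg_cong[OF bb[THEN conjunct2, THEN conjunct2, THEN conjunct2, THEN conjunct2,
        THEN conjunct2, THEN conjunct2, THEN conjunct2, THEN conjunct1], of p] v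
      by (simp add: q_def plin key)
    show "q Dd (q (J0 n) v) - q (J0 n) (q Dd v) = scale (of_int n) (q (J0 n) v)"
      using arg_cong[OF bb[THEN conjunct2, THEN conjunct2, THEN conjunct2, THEN conjunct2,
        THEN conjunct2, THEN conjunct2, THEN conjunct2, THEN conjunct2, THEN conjunct1], of p] v
      by (simp add: q_def plin key)
  qed
  have c6: "\<forall>v\<in>T. \<forall>x. q Kc (q x v) = q x (q Kc v)"
    using br_K TA by (simp add: q_def key)
  have mod: "aff_module scale T q"
    unfolding aff_module_def using T(1) qcl qadd qscale c4 c5 c6 by blast
  show ?thesis
    apply (rule exI[of _ T], rule exI[of _ p])
    using T(2) mod hom p0 pT pin unfolding q_def by blast
qed

end

lemma rel_Dplus_hom:
  assumes "aff_hom scale A \<rho> B \<sigma> \<phi>" "\<And>m. e m \<in> A" "rel_Dplus scale j k \<rho> e" "vector_space scale"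
  shows "rel_Dplus scale j k \<sigma> (\<lambda>m. \<phi> (e m))"
proof -
  interpret vsp scale using assms(4) by (simp add: vsp_def)
  have h: "\<phi> (scale c (e m)) = scale c (\<phi> (e m))" "\<phi> (\<rho> x (e m)) = \<sigma> x (\<phi> (e m))" for c m x
    using assms(1,2) unfolding aff_hom_def by blast+
  have z: "\<phi> 0 = 0" using h(1)[of 0 0] by simp
  show ?thesis using assms(3) unfolding rel_Dplus_def
    by (metis h z)
qed

lemma rel_Dplus_ext:
  assumes "rel_Dplus scale j k \<rho> e" "\<And>m. e' m = e m"
  shows "rel_Dplus scale j k \<rho> e'"
  using assms by (metis ext)




primrec cc :: "int \<Rightarrow> nat \<Rightarrow> real" where
  "cc k 0 = 1"
| "cc k (Suc m) = cc k m / sqrt ((real m + 1) * (real m - real_of_int k))"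

locale bctx = affm scale B \<sigma> for scale :: "complex \<Rightarrow> 'u::ab_group_add \<Rightarrow> 'u" and B \<sigma> +
  fixes k :: int and v :: "unit \<Rightarrow> 'u"
  assumes relB: "rel_D0 scale k \<sigma> v" and vB: "v () \<in> B" and kneg: "k < -2"
begin

definition w :: "nat \<Rightarrow> 'u" where "w m = (\<sigma> (Jp (-1)) ^^ m) (v ())"

lemma w0: "w 0 = v ()" by (simp add: w_def)
lemma wS: "w (Suc m) = \<sigma> (Jp (-1)) (w m)" by (simp add: w_def)
lemma wB[simp]: "w m \<in> B" by (induction m) (simp_all add: w0 wS vB)

lemma v_rel:
  "n \<ge> 0 \<Longrightarrow> \<sigma> (Jp n) (v ()) = 0" "n \<ge> 0 \<Longrightarrow> \<sigma> (Jm n) (v ()) = 0" "n \<ge> 0 \<Longrightarrow> \<sigma> (J0 n) (v ()) = 0"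
  "\<sigma> Kc (v ()) = scale (of_int k) (v ())" "\<sigma> Dd (v ()) = 0"
  using relB unfolding rel_D0_def by blast+

lemma wK: "\<sigma> Kc (w m) = scale (of_int k) (w m)"
proof (induction m)
  case 0 then show ?case by (simp add: w0 v_rel)
next
  case (Suc m) then show ?case using br_K[of "w m" "Jp (-1)"] by (simp add: wS)
qed

lemma wJ00: "\<sigma> (J0 0) (w m) = scale (2 * of_nat m) (w m)"
proof (induction m)
  case 0 then show ?case by (simp add: w0 v_rel)
next
  case (Suc m) then show ?case using br_0p[of "w m" 0 "-1"] by (simp add: wS algebra_simps)
qed

lemma wJp: "n \<ge> 0 \<Longrightarrow> \<sigma> (Jp n) (w m) = 0"
proof (induction m)
  case 0 then show ?case by (simp add: w0 v_rel)
next
  case (Suc m) then show ?case using br_pp[of "w m" n "-1"] by (simp add: wS)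
qed

lemma wJ0: "n \<ge> 1 \<Longrightarrow> \<sigma> (J0 n) (w m) = 0"
proof (induction m)
  case 0 then show ?case by (simp add: w0 v_rel)
next
  case (Suc m) then show ?case using br_0p[of "w m" n "-1"] wJp[of "n - 1" m] by (simp add: wS)
qed

lemma wJm: "n \<ge> 2 \<Longrightarrow> \<sigma> (Jm n) (w m) = 0"
proof (induction m)
  case 0 then show ?case by (simp add: w0 v_rel)
next
  case (Suc m) then show ?case using br_pm[of "w m" "-1" n] wJ0[of "n - 1" m] by (simp add: wS)
qed

lemma wJm1_0: "\<sigma> (Jm 1) (w 0) = 0" by (simp add: w0 v_rel)

lemma wJm1: "\<sigma> (Jm 1) (w (Suc m)) = scale (- ((of_nat m + 1) * (of_nat m - of_int k))) (w m)"
proof (induction m)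
  case 0 then show ?case using br_pm[of "w 0" "-1" 1] wJm1_0 wJ00[of 0] wK[of 0]
    by (simp add: wS eq_diff_eq)
next
  case (Suc m)
  have "\<sigma> (Jp (-1)) (\<sigma> (Jm 1) (w (Suc m))) = \<sigma> (Jm 1) (w (Suc (Suc m))) + (\<sigma> (J0 0) (w (Suc m)) + scale (-1) (\<sigma> Kc (w (Suc m))))"
    using br_pm[of "w (Suc m)" "-1" 1] by (simp add: wS)
  then have "\<sigma> (Jm 1) (w (Suc (Suc m))) = \<sigma> (Jp (-1)) (\<sigma> (Jm 1) (w (Suc m))) - \<sigma> (J0 0) (w (Suc m)) + \<sigma> Kc (w (Suc m))"
    by (simp add: algebra_simps)
  also have h1: "\<sigma> (Jp (-1)) (\<sigma> (Jm 1) (w (Suc m))) = scale (- ((of_nat m + 1) * (of_nat m - of_int k))) (w (Suc m))"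
    unfolding Suc.IH by (simp add: wS)
  also have "scale (- ((of_nat m + 1) * (of_nat m - of_int k))) (w (Suc m)) - \<sigma> (J0 0) (w (Suc m)) + \<sigma> Kc (w (Suc m))
     = scale (- ((of_nat m + 1) * (of_nat m - of_int k)) - 2 * of_nat (Suc m) + of_int k) (w (Suc m))"
    unfolding wJ00 wK by (simp only: scale_left_diff_distrib scale_left_distrib)
  also have "- ((of_nat m + 1) * (of_nat m - of_int k)) - 2 * of_nat (Suc m) + of_int k
      = - ((of_nat (Suc m) + 1) * (of_nat (Suc m) - (of_int k :: complex)))"
    by (simp add: algebra_simps)
  finally show ?case .
qed

lemma wD: "\<sigma> Dd (w m) = scale (- of_nat m) (w m)"
proof (induction m)
  case 0 then show ?case by (simp add: w0 v_rel)
next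
  case (Suc m) then show ?case using br_dp[of "w m" "-1"] by (simp add: wS algebra_simps)
qed

definition f :: "nat \<Rightarrow> 'u" where "f m = scale (of_real (cc k m)) (w m)"

lemma fB: "f m \<in> B" by (simp add: f_def)

lemma f0: "f 0 = v ()" by (simp add: f_def w0)

lemma pos1: "(real m + 1) * (real m - real_of_int k) > 0"
  using kneg by (intro mult_pos_pos) auto

lemma f_rel: "rel_Dplus scale (real_of_int k / 2) k (spectral_flow scale 1 \<sigma>) f"
  unfolding rel_Dplus_def
proof (intro allI conjI impI)
  fix m :: nat
  let ?s = "spectral_flow scale 1 \<sigma>"
  show "?s (J0 0) (f m) = scale (of_real (2 * (real m - real_of_int k / 2))) (f m)"
    by (simp add: f_def wJ00 wK algebra_simps)
  show "?s (Jp 0) (f m) = scale (of_real (sqrt ((real m + 1) * (real m - 2 * (real_of_int k / 2))))) (f (m + 1))"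
  proof -
    define s where "s = sqrt ((real m + 1) * (real m - real_of_int k))"
    have sp: "s > 0" using pos1 by (simp add: s_def)
    have cm: "cc k m = s * cc k (Suc m)" using sp by (simp add: s_def[symmetric])
    have ccm: "complex_of_real (cc k m) = of_real s * of_real (cc k (Suc m))" by (simp only: cm of_real_mult)
    have e2: "2 * (real_of_int k / 2) = real_of_int k" by simp
    show ?thesis unfolding e2 s_def[symmetric] by (simp add: f_def wS ccm del: cc.simps)
  qed
  show "?s (Jm 0) (f m) = scale (of_real (- sqrt (real m * (real m - 1 - 2 * (real_of_int k / 2))))) (f (m - 1))"
  proof (cases m)
    case 0 then show ?thesis by (simp add: f_def wJm1_0)
  next
    case (Suc m')
    have P: "(real m' + 1) * (real m' - real_of_int k) > 0" by (rule pos1)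
    define s where "s = sqrt ((real m' + 1) * (real m' - real_of_int k))"
    have sp: "s > 0" using P by (simp add: s_def)
    have ss: "s * s = (real m' + 1) * (real m' - real_of_int k)" using P by (simp add: s_def)
    have eq: "cc k (Suc m') * ((real m' + 1) * (real m' - real_of_int k)) = s * cc k m'"
    proof -
      have c1: "cc k (Suc m') = cc k m' / s" by (simp add: s_def)
      show ?thesis unfolding c1 ss[symmetric] using sp by (simp add: field_simps)
    qed
    have "?s (Jm 0) (f m) = scale (of_real (cc k (Suc m')) * (- ((of_nat m' + 1) * (of_nat m' - of_int k)))) (w m')"
      by (simp add: Suc f_def wJm1)
    also have "of_real (cc k (Suc m')) * (- ((of_nat m' + 1) * (of_nat m' - of_int k))) = 
       (of_real (- (cc k (Suc m') * ((real m' + 1) * (real m' - real_of_int k)))) :: complex)"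
      by simp
    also have "\<dots> = of_real (- s) * of_real (cc k m')" unfolding eq by simp
    finally show ?thesis
      by (simp add: Suc f_def s_def algebra_simps)
  qed
  show "?s Kc (f m) = scale (of_int k) (f m)"
    by (simp add: f_def wK scale_left_commute)
  fix n :: int assume n: "1 \<le> n"
  show "?s (Jp n) (f m) = 0" using n by (simp add: f_def wJp)
  show "?s (Jm n) (f m) = 0" using n by (simp add: f_def wJm)
  show "?s (J0 n) (f m) = 0" using n by (simp add: f_def wJ0)
next
  fix m :: nat
  let ?s = "spectral_flow scale 1 \<sigma>"
  have k2: "real_of_int k + 2 \<noteq> 0" using kneg by simp
  have r: "- (real_of_int k / 2 * (real_of_int k / 2 + 1) / (real_of_int k + 2)) = - real_of_int k / 4"
    using k2 by (simp add: field_simps)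
  show "?s Dd (f m) = scale (of_real (- (real_of_int k / 2 * (real_of_int k / 2 + 1) / (real_of_int k + 2)))) (f m)"
    unfolding r by (simp add: f_def wD wJ00 wK algebra_simps)
qed

end



context affm begin

lemma hom_zero: "aff_hom scale A \<rho> B \<sigma> \<phi> \<Longrightarrow> \<phi> 0 = 0"
  unfolding aff_hom_def using zA by (metis scale_zero_left)

lemma hom_add: "aff_hom scale A \<rho> B \<sigma> \<phi> \<Longrightarrow> u \<in> A \<Longrightarrow> v \<in> A \<Longrightarrow> \<phi> (u + v) = \<phi> u + \<phi> v"
  unfolding aff_hom_def by blast

lemma hom_scale: "aff_hom scale A \<rho> B \<sigma> \<phi> \<Longrightarrow> v \<in> A \<Longrightarrow> \<phi> (scale c v) = scale c (\<phi> v)"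
  unfolding aff_hom_def by blast

lemma hom_act: "aff_hom scale A \<rho> B \<sigma> \<phi> \<Longrightarrow> v \<in> A \<Longrightarrow> \<phi> (\<rho> x v) = \<sigma> x (\<phi> v)"
  unfolding aff_hom_def by blast

lemma hom_in: "aff_hom scale A \<rho> B \<sigma> \<phi> \<Longrightarrow> v \<in> A \<Longrightarrow> \<phi> v \<in> B"
  unfolding aff_hom_def by blast

lemma hom_diff: "aff_hom scale A \<rho> B \<sigma> \<phi> \<Longrightarrow> u \<in> A \<Longrightarrow> v \<in> A \<Longrightarrow> \<phi> (u - v) = \<phi> u - \<phi> v"
  using hom_add[of B \<sigma> \<phi> "u - v" v] by (simp add: eq_diff_eq)

lemma hom_flow:
  assumes h: "aff_hom scale A \<rho> B \<sigma> \<phi>"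
  shows "aff_hom scale A (spectral_flow scale s \<rho>) B (spectral_flow scale s \<sigma>) \<phi>"
proof -
  have "\<phi> (spectral_flow scale s \<rho> x u) = spectral_flow scale s \<sigma> x (\<phi> u)" if u: "u \<in> A" for x u
    using u by (cases x) (simp_all add: hom_act[OF h] hom_diff[OF h] hom_add[OF h] hom_scale[OF h] hom_zero[OF h])
  then show ?thesis using h unfolding aff_hom_def by blast
qed

lemma gen_props:
  assumes w: "w \<in> A"
  shows "gen_submodule scale A \<rho> w \<subseteq> A" "subspace (gen_submodule scale A \<rho> w)"
    "\<And>x u. u \<in> gen_submodule scale A \<rho> w \<Longrightarrow> \<rho> x u \<in> gen_submodule scale A \<rho> w"
    "w \<in> gen_submodule scale A \<rho> w"
    "\<And>S. S \<subseteq> A \<Longrightarrow> subspace S \<Longrightarrow> (\<forall>x. \<forall>v\<in>S. \<rho> x v \<in> S) \<Longrightarrow> w \<in> S \<Longrightarrow> gen_submodule scale A \<rho> w \<subseteq> S"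
proof -
  let ?F = "{S. S \<subseteq> A \<and> subspace S \<and> (\<forall>x. \<forall>v\<in>S. \<rho> x v \<in> S) \<and> w \<in> S}"
  have AF: "A \<in> ?F" using sub w by auto
  show "gen_submodule scale A \<rho> w \<subseteq> A" unfolding gen_submodule_def using AF by blast
  show "subspace (gen_submodule scale A \<rho> w)" unfolding gen_submodule_def
    by (rule subspace_Inter) blast
  show "\<And>x u. u \<in> gen_submodule scale A \<rho> w \<Longrightarrow> \<rho> x u \<in> gen_submodule scale A \<rho> w"
    unfolding gen_submodule_def by blast
  show "w \<in> gen_submodule scale A \<rho> w" unfolding gen_submodule_def by blast
  show "\<And>S. S \<subseteq> A \<Longrightarrow> subspace S \<Longrightarrow> (\<forall>x. \<forall>v\<in>S. \<rho> x v \<in> S) \<Longrightarrow> w \<in> S \<Longrightarrow> gen_submodule scale A \<rho> w \<subseteq> S"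
    unfolding gen_submodule_def by blast
qed

end

lemma (in vsp) seq_agree:
  assumes h1: "aff_hom scale B \<sigma> T q \<psi>" and h2: "aff_hom scale A \<rho> T q p"
    and r1: "rel_Dplus scale j k \<sigma> f" and r2: "rel_Dplus scale j k \<rho> e"
    and fB: "\<And>m. f m \<in> B" and eA: "\<And>m. e m \<in> A"
    and nz: "\<And>m::nat. sqrt ((real m + 1) * (real m - 2 * j)) \<noteq> 0"
    and base: "\<psi> (f 0) = p (e 0)"
  shows "\<psi> (f m) = p (e m)"
proof (induction m)
  case 0 then show ?case by (rule base)
next
  case (Suc m)
  define a where "a = complex_of_real (sqrt ((real m + 1) * (real m - 2 * j)))"
  have a: "a \<noteq> 0" using nz[of m] by (simp add: a_def)
  have f1: "\<sigma> (Jp 0) (f m) = scale a (f (m + 1))" using r1 unfolding rel_Dplus_def a_def by blast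
  have e1: "\<rho> (Jp 0) (e m) = scale a (e (m + 1))" using r2 unfolding rel_Dplus_def a_def by blast
  have "scale a (\<psi> (f (Suc m))) = \<psi> (\<sigma> (Jp 0) (f m))"
    using f1 h1 fB unfolding aff_hom_def by simp
  also have "\<dots> = q (Jp 0) (\<psi> (f m))" using h1 fB unfolding aff_hom_def by blast
  also have "\<dots> = q (Jp 0) (p (e m))" using Suc by simp
  also have "\<dots> = p (\<rho> (Jp 0) (e m))" using h2 eA unfolding aff_hom_def by metis
  also have "\<dots> = scale a (p (e (Suc m)))" using e1 h2 eA unfolding aff_hom_def by simp
  finally have "scale (inverse a) (scale a (\<psi> (f (Suc m)))) = scale (inverse a) (scale a (p (e (Suc m))))"
    by simp
  then show ?case using a by simp
qed

lemma plus_case: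
  fixes scale :: "complex \<Rightarrow> 'u::ab_group_add \<Rightarrow> 'u" and k :: int
    and Ap B :: "'u set" and \<rho>p \<sigma> :: "gen \<Rightarrow> 'u \<Rightarrow> 'u"
    and ep :: "nat \<Rightarrow> 'u" and v :: "unit \<Rightarrow> 'u"
  assumes VS: "vector_space scale"
    and kneg: "k < -2"
    and PA: "is_prolongation scale Ap \<rho>p ep (rel_Dplus scale (real_of_int k / 2) k)"
    and PB: "is_prolongation scale B \<sigma> v (rel_D0 scale k)"
  shows "\<exists>\<phi>. aff_hom scale Ap \<rho>p B (spectral_flow scale 1 \<sigma>) \<phi> \<and> \<phi> ` Ap = B \<and>
             {x\<in>Ap. \<phi> x = 0} = gen_submodule scale Ap \<rho>p (\<rho>p (Jm (-1)) (ep 0))"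
proof -
  interpret vsp scale using VS by (simp add: vsp_def)
  have amA: "aff_module scale Ap \<rho>p" and epA: "\<And>m. ep m \<in> Ap"
    and relA: "rel_Dplus scale (real_of_int k / 2) k \<rho>p ep"
    using PA unfolding is_prolongation_def by blast+
  have amB: "aff_module scale B \<sigma>" and vB: "v () \<in> B" and relB: "rel_D0 scale k \<sigma> v"
    using PB unfolding is_prolongation_def by blast+
  interpret A: affm scale Ap \<rho>p by (unfold_locales) (rule amA)
  interpret Bc: bctx scale B \<sigma> k v by (unfold_locales) (fact amB relB vB kneg)+
  define \<sigma>1 where "\<sigma>1 = spectral_flow scale 1 \<sigma>"
  have am1: "aff_module scale B \<sigma>1" unfolding \<sigma>1_def by (rule Bc.flow_module)
  have UA: "\<And>C \<tau> g. aff_module scale C \<tau> \<Longrightarrow> (\<forall>i. g i \<in> C) \<Longrightarrow> rel_Dplus scale (real_of_int k / 2) k \<tau> g \<Longrightarrow>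
        (\<exists>\<phi>. aff_hom scale Ap \<rho>p C \<tau> \<phi> \<and> (\<forall>i. \<phi> (ep i) = g i)) \<and>
        (\<forall>\<phi> \<psi>. aff_hom scale Ap \<rho>p C \<tau> \<phi> \<and> (\<forall>i. \<phi> (ep i) = g i) \<and>
                aff_hom scale Ap \<rho>p C \<tau> \<psi> \<and> (\<forall>i. \<psi> (ep i) = g i) \<longrightarrow> (\<forall>v\<in>Ap. \<phi> v = \<psi> v))"
    using PA unfolding is_prolongation_def by blast
  have UB: "\<And>C \<tau> g. aff_module scale C \<tau> \<Longrightarrow> (\<forall>i. g i \<in> C) \<Longrightarrow> rel_D0 scale k \<tau> g \<Longrightarrow>
        (\<exists>\<phi>. aff_hom scale B \<sigma> C \<tau> \<phi> \<and> (\<forall>i. \<phi> (v i) = g i)) \<and>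
        (\<forall>\<phi> \<psi>. aff_hom scale B \<sigma> C \<tau> \<phi> \<and> (\<forall>i. \<phi> (v i) = g i) \<and>
                aff_hom scale B \<sigma> C \<tau> \<psi> \<and> (\<forall>i. \<psi> (v i) = g i) \<longrightarrow> (\<forall>u\<in>B. \<phi> u = \<psi> u))"
    using PB unfolding is_prolongation_def by blast
  obtain \<phi> where hphi: "aff_hom scale Ap \<rho>p B \<sigma>1 \<phi>" and phie: "\<And>i. \<phi> (ep i) = Bc.f i"
    using UA[OF am1 _ Bc.f_rel[folded \<sigma>1_def]] Bc.fB by blast
  define wv where "wv = \<rho>p (Jm (-1)) (ep 0)"
  define W where "W = gen_submodule scale Ap \<rho>p wv"
  have wvA: "wv \<in> Ap" unfolding wv_def using epA by simp
  note Wp = A.gen_props[OF wvA, folded W_def]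
  obtain T p where TA: "T \<subseteq> Ap" and amT: "aff_module scale T (\<lambda>x t. p (\<rho>p x t))"
    and hp: "aff_hom scale Ap \<rho>p T (\<lambda>x t. p (\<rho>p x t)) p"
    and p0: "\<forall>u\<in>Ap. p u = 0 \<longleftrightarrow> u \<in> W" and pT: "\<forall>t\<in>T. p t = t" and pd: "\<forall>u\<in>Ap. u - p u \<in> W"
    using A.quotient[OF Wp(2) Wp(1) Wp(3)] by blast
  define q where "q = (\<lambda>x t. p (\<rho>p x t))"
  interpret Tm: affm scale T q by unfold_locales (simp add: q_def amT)
  define q1 where "q1 = spectral_flow scale (-1) q"
  have amq1: "aff_module scale T q1" unfolding q1_def by (rule Tm.flow_module)
  have e0T: "p (ep 0) \<in> T" using hp epA unfolding aff_hom_def by blast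
  have rall: "\<And>m. \<rho>p (J0 0) (ep m) = scale (of_real (2 * (real m - real_of_int k / 2))) (ep m) \<and>
     \<rho>p (Jp 0) (ep m) = scale (of_real (sqrt ((real m + 1) * (real m - 2 * (real_of_int k / 2))))) (ep (m + 1)) \<and>
     \<rho>p (Jm 0) (ep m) = scale (of_real (- sqrt (real m * (real m - 1 - 2 * (real_of_int k / 2))))) (ep (m - 1)) \<and>
     \<rho>p Kc (ep m) = scale (of_int k) (ep m) \<and>
     (\<forall>n\<ge>1. \<rho>p (Jp n) (ep m) = 0 \<and> \<rho>p (Jm n) (ep m) = 0 \<and> \<rho>p (J0 n) (ep m) = 0) \<and>
     \<rho>p Dd (ep m) = scale (of_real (- (real_of_int k / 2 * (real_of_int k / 2 + 1) / (real_of_int k + 2)))) (ep m)"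
    using relA unfolding rel_Dplus_def by blast
  have k2: "real_of_int k + 2 \<noteq> 0" using kneg by simp
  have rD: "- (real_of_int k / 2 * (real_of_int k / 2 + 1) / (real_of_int k + 2)) = - real_of_int k / 4"
    using k2 by (simp add: field_simps)
  have relA0: "\<rho>p (J0 0) (ep 0) = scale (- of_int k) (ep 0)"
    "\<rho>p (Jm 0) (ep 0) = 0"
    "\<rho>p Kc (ep 0) = scale (of_int k) (ep 0)"
    "\<And>n. n \<ge> 1 \<Longrightarrow> \<rho>p (Jp n) (ep 0) = 0 \<and> \<rho>p (Jm n) (ep 0) = 0 \<and> \<rho>p (J0 n) (ep 0) = 0"
    "\<rho>p Dd (ep 0) = scale (- of_int k / 4) (ep 0)"
    using rall[of 0] unfolding rD by simp_all
  have pkey: "p (\<rho>p x (p u)) = p (\<rho>p x u)" if "u \<in> Ap" for u x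
    using A.hom_act[OF hp that, of x] by simp
  have pneg: "p (- u) = - p u" if "u \<in> Ap" for u
    using A.hom_scale[OF hp that, of "-1"] by simp
  have pz: "p 0 = 0" using A.hom_zero[OF hp] .
  have psc: "p (scale c (ep 0)) = scale c (p (ep 0))" for c using A.hom_scale[OF hp epA] .
  have pwv: "p wv = 0" using p0 Wp(4) wvA by blast
  have relq1: "rel_D0 scale k q1 (\<lambda>_. p (ep 0))"
    unfolding rel_D0_def
  proof (intro allI conjI impI)
    fix i :: unit and n :: int assume n: "n \<ge> 0"
    show "q1 (Jp n) (p (ep 0)) = 0"
      using relA0(4)[of "n + 1"] n by (simp add: q1_def q_def pkey[OF epA] pz)
    show "q1 (Jm n) (p (ep 0)) = 0"
    proof (cases "n = 0")
      case True then show ?thesis using pwv by (simp add: q1_def q_def pkey[OF epA] wv_def)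
    next
      case False
      show ?thesis
      proof (cases "n = 1")
        case True then show ?thesis using relA0(2) by (simp add: q1_def q_def pkey[OF epA] pz)
      next
        case False then show ?thesis using relA0(4)[of "n - 1"] n \<open>n \<noteq> 0\<close>
          by (simp add: q1_def q_def pkey[OF epA] pz)
      qed
    qed
    show "q1 (J0 n) (p (ep 0)) = 0"
    proof (cases "n = 0")
      case True then show ?thesis using relA0(1,3)
        apply (simp add: q1_def q_def pkey[OF epA] psc pneg epA)
        apply ((simp add: scale_left_distrib[symmetric] scale_left_diff_distrib[symmetric])?)
        done
    next
      case False then show ?thesis using relA0(4)[of n] n
        by (simp add: q1_def q_def pkey[OF epA] pz)
    qed
  next
    fix i :: unit
    show "q1 Kc (p (ep 0)) = scale (of_int k) (p (ep 0))"
      using relA0(3) by (simp add: q1_def q_def pkey[OF epA] psc pneg epA)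
    show "q1 Dd (p (ep 0)) = 0"
      using relA0(1,3,5)
      apply (simp add: q1_def q_def pkey[OF epA] psc pneg epA)
      apply ((simp add: scale_left_distrib[symmetric] scale_left_diff_distrib[symmetric])?)
      done
  qed
  obtain \<psi> where hpsi: "aff_hom scale B \<sigma> T q1 \<psi>" and psiv: "\<psi> (v ()) = p (ep 0)"
    using UB[OF amq1 _ relq1] e0T by blast
  have hpsi1: "aff_hom scale B \<sigma>1 T q \<psi>"
    using Bc.hom_flow[OF hpsi, of 1] unfolding \<sigma>1_def q1_def flow_inv1 .
  have hcomp: "aff_hom scale Ap \<rho>p T q (\<lambda>x. \<psi> (\<phi> x))" by (rule hom_comp[OF hphi hpsi1])
  have hp': "aff_hom scale Ap \<rho>p T q p" using hp unfolding q_def .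
  have nz: "sqrt ((real m + 1) * (real m - 2 * (real_of_int k / 2))) \<noteq> 0" for m :: nat
  proof -
    have P: "(real m + 1) * (real m - 2 * (real_of_int k / 2)) > 0" using Bc.pos1[of m] by simp
    show ?thesis using real_sqrt_gt_zero[OF P] by linarith
  qed
  have agree: "\<psi> (Bc.f m) = p (ep m)" for m
    by (rule seq_agree[OF hpsi1 hp' Bc.f_rel[folded \<sigma>1_def] relA Bc.fB epA nz])
       (simp add: Bc.f0 psiv)
  have relT: "rel_Dplus scale (real_of_int k / 2) k q (\<lambda>m. p (ep m))"
    by (rule rel_Dplus_hom[OF hp' epA relA VS])
  have pepT: "\<forall>i. p (ep i) \<in> T" using hp epA unfolding aff_hom_def by blast
  have psiphi: "\<forall>u\<in>Ap. \<psi> (\<phi> u) = p u"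
  proof -
    have U: "\<forall>\<phi>' \<psi>'. aff_hom scale Ap \<rho>p T q \<phi>' \<and> (\<forall>i. \<phi>' (ep i) = p (ep i)) \<and>
                aff_hom scale Ap \<rho>p T q \<psi>' \<and> (\<forall>i. \<psi>' (ep i) = p (ep i)) \<longrightarrow> (\<forall>v\<in>Ap. \<phi>' v = \<psi>' v)"
      using UA[OF Tm.am pepT relT] by blast
    have ag: "\<forall>i. \<psi> (\<phi> (ep i)) = p (ep i)" using agree phie by simp
    show ?thesis using U[THEN spec[of _ "\<lambda>x. \<psi> (\<phi> x)"], THEN spec[of _ p]] hcomp hp' ag by simp
  qed
  have ker1: "{x\<in>Ap. \<phi> x = 0} \<subseteq> W"
  proof
    fix x assume "x \<in> {x\<in>Ap. \<phi> x = 0}"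
    then have x: "x \<in> Ap" "\<phi> x = 0" by auto
    have "p x = \<psi> 0" using psiphi x by metis
    also have "\<psi> 0 = 0" using Bc.hom_zero[OF hpsi] .
    finally show "x \<in> W" using p0 x by blast
  qed
  have ker2: "W \<subseteq> {x\<in>Ap. \<phi> x = 0}"
  proof (rule Wp(5))
    show "{x\<in>Ap. \<phi> x = 0} \<subseteq> Ap" by blast
    show "subspace {x\<in>Ap. \<phi> x = 0}"
    proof (rule subspaceI)
      show "0 \<in> {x\<in>Ap. \<phi> x = 0}" using A.hom_zero[OF hphi] by simp
      show "x + y \<in> {x\<in>Ap. \<phi> x = 0}" if "x \<in> {x\<in>Ap. \<phi> x = 0}" "y \<in> {x\<in>Ap. \<phi> x = 0}" for x y
        using that A.hom_add[OF hphi] by simp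
      show "scale c x \<in> {x\<in>Ap. \<phi> x = 0}" if "x \<in> {x\<in>Ap. \<phi> x = 0}" for c x
        using that A.hom_scale[OF hphi] by simp
    qed
    interpret B1: affm scale B \<sigma>1 by unfold_locales (rule am1)
    show "\<forall>x. \<forall>u\<in>{x\<in>Ap. \<phi> x = 0}. \<rho>p x u \<in> {x\<in>Ap. \<phi> x = 0}"
      using A.hom_act[OF hphi] by simp
    show "wv \<in> {x\<in>Ap. \<phi> x = 0}"
      using wvA A.hom_act[OF hphi epA, of "Jm (-1)"] phie[of 0] Bc.f0 Bc.v_rel(2)[of 0]
      by (simp add: wv_def \<sigma>1_def)
  qed
  have phip: "\<phi> (p u) = \<phi> u" if u: "u \<in> Ap" for u
  proof -
    have "u - p u \<in> W" using pd u by blast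
    then have "\<phi> (u - p u) = 0" using ker2 by blast
    moreover have "p u \<in> Ap" using hp u TA unfolding aff_hom_def by blast
    ultimately show ?thesis using A.hom_diff[OF hphi u] by simp
  qed
  have hchi: "aff_hom scale T q B \<sigma>1 \<phi>"
    unfolding aff_hom_def
  proof (intro conjI allI ballI)
    fix t assume t: "t \<in> T" then have tA: "t \<in> Ap" using TA by blast
    show "\<phi> t \<in> B" using A.hom_in[OF hphi tA] .
    fix x show "\<phi> (q x t) = \<sigma>1 x (\<phi> t)" unfolding q_def using phip A.hom_act[OF hphi tA] tA by simp
  next
    fix u t assume "u \<in> T" "t \<in> T" then show "\<phi> (u + t) = \<phi> u + \<phi> t" using TA A.hom_add[OF hphi] by blast
  next
    fix c t assume "t \<in> T" then show "\<phi> (scale c t) = scale c (\<phi> t)" using TA A.hom_scale[OF hphi] by blast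
  qed
  have hchi1: "aff_hom scale T q1 B \<sigma> \<phi>"
    using Tm.hom_flow[OF hchi, of "-1"] unfolding \<sigma>1_def q1_def flow_inv2 .
  have hcc: "aff_hom scale B \<sigma> B \<sigma> (\<lambda>x. \<phi> (\<psi> x))" by (rule hom_comp[OF hpsi hchi1])
  have "\<phi> (\<psi> (v ())) = v ()" using psiv phip[OF epA[of 0]] phie[of 0] Bc.f0 by simp
  then have "\<forall>u\<in>B. \<phi> (\<psi> u) = u"
    using UB[OF amB _ relB] vB hcc hom_id[OF amB] by (metis (full_types) old.unit.exhaust)
  then have surj: "B \<subseteq> \<phi> ` Ap"
    using Bc.hom_in[OF hpsi] TA by (metis image_eqI subsetD subsetI)
  have "\<phi> ` Ap \<subseteq> B" using A.hom_in[OF hphi] by blast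
  with surj have "\<phi> ` Ap = B" by blast
  moreover have "{x\<in>Ap. \<phi> x = 0} = gen_submodule scale Ap \<rho>p (\<rho>p (Jm (-1)) (ep 0))"
    using ker1 ker2 unfolding W_def wv_def by blast
  ultimately show ?thesis using hphi unfolding \<sigma>1_def by blast
qed




definition tw :: "(gen \<Rightarrow> 'u \<Rightarrow> 'u::ab_group_add) \<Rightarrow> gen \<Rightarrow> 'u \<Rightarrow> 'u" where
  "tw \<rho> x v = (case x of Jp n \<Rightarrow> \<rho> (Jm n) v | Jm n \<Rightarrow> \<rho> (Jp n) v | J0 n \<Rightarrow> - \<rho> (J0 n) v
     | Kc \<Rightarrow> \<rho> Kc v | Dd \<Rightarrow> \<rho> Dd v)"

lemma tw_simps[simp]: "tw \<rho> (Jp n) v = \<rho> (Jm n) v" "tw \<rho> (Jm n) v = \<rho> (Jp n) v"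
  "tw \<rho> (J0 n) v = - \<rho> (J0 n) v" "tw \<rho> Kc v = \<rho> Kc v" "tw \<rho> Dd v = \<rho> Dd v"
  by (simp_all add: tw_def)

lemma tw_tw[simp]: "tw (tw \<rho>) = \<rho>"
proof (intro ext)
  fix x v show "tw (tw \<rho>) x v = \<rho> x v" by (cases x) simp_all
qed

context affm begin

lemma tw_module: "aff_module scale A (tw \<rho>)"
proof -
  let ?f = "tw \<rho>"
  have c1: "\<forall>x. \<forall>v\<in>A. ?f x v \<in> A"
  proof (intro allI ballI)
    fix x v assume "v \<in> A" then show "?f x v \<in> A" by (cases x) auto
  qed
  have c2: "\<forall>x. \<forall>u\<in>A. \<forall>v\<in>A. ?f x (u + v) = ?f x u + ?f x v"
  proof (intro allI ballI)
    fix x u v assume "u \<in> A" "v \<in> A" then show "?f x (u + v) = ?f x u + ?f x v"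
      by (cases x) (auto simp: algebra_simps)
  qed
  have c3: "\<forall>x c. \<forall>v\<in>A. ?f x (scale c v) = scale c (?f x v)"
  proof (intro allI ballI)
    fix x c v assume "v \<in> A" then show "?f x (scale c v) = scale c (?f x v)"
      by (cases x) auto
  qed
  have c4: "\<forall>v\<in>A. \<forall>m n.
        ?f (Jp m) (?f (Jm n) v) - ?f (Jm n) (?f (Jp m) v)
          = ?f (J0 (m + n)) v + (if m + n = 0 then scale (of_int m) (?f Kc v) else 0) \<and>
        ?f (J0 m) (?f (Jp n) v) - ?f (Jp n) (?f (J0 m) v) = scale 2 (?f (Jp (m + n)) v) \<and>
        ?f (J0 m) (?f (Jm n) v) - ?f (Jm n) (?f (J0 m) v) = scale (-2) (?f (Jm (m + n)) v) \<and>
        ?f (J0 m) (?f (J0 n) v) - ?f (J0 n) (?f (J0 m) v)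
          = (if m + n = 0 then scale (2 * of_int m) (?f Kc v) else 0) \<and>
        ?f (Jp m) (?f (Jp n) v) = ?f (Jp n) (?f (Jp m) v) \<and>
        ?f (Jm m) (?f (Jm n) v) = ?f (Jm n) (?f (Jm m) v)"
  proof (intro ballI allI conjI)
    fix v m n assume v: "v \<in> A"
    show "?f (Jp m) (?f (Jm n) v) - ?f (Jm n) (?f (Jp m) v)
          = ?f (J0 (m + n)) v + (if m + n = 0 then scale (of_int m) (?f Kc v) else 0)"
    proof (cases "m + n = 0")
      case True
      then have nm: "n = - m" by simp
      show ?thesis using br_pm[OF v, of n m] True unfolding nm by (simp add: algebra_simps)
    next
      case False then show ?thesis using br_pm[OF v, of n m] by (simp add: algebra_simps)
    qed
    show "?f (J0 m) (?f (Jp n) v) - ?f (Jp n) (?f (J0 m) v) = scale 2 (?f (Jp (m + n)) v)"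
      using br_0m[OF v, of m n] v by (simp add: algebra_simps)
    show "?f (J0 m) (?f (Jm n) v) - ?f (Jm n) (?f (J0 m) v) = scale (-2) (?f (Jm (m + n)) v)"
      using br_0p[OF v, of m n] v by (simp add: algebra_simps)
    show "?f (J0 m) (?f (J0 n) v) - ?f (J0 n) (?f (J0 m) v)
          = (if m + n = 0 then scale (2 * of_int m) (?f Kc v) else 0)"
      using br_00[OF v, of m n] v by (cases "m + n = 0") (simp_all add: algebra_simps)
    show "?f (Jp m) (?f (Jp n) v) = ?f (Jp n) (?f (Jp m) v)"
      using br_mm[OF v] by simp
    show "?f (Jm m) (?f (Jm n) v) = ?f (Jm n) (?f (Jm m) v)"
      using br_pp[OF v] by simp
  qed
  have c5: "\<forall>v\<in>A. \<forall>n.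
        ?f Dd (?f (Jp n) v) - ?f (Jp n) (?f Dd v) = scale (of_int n) (?f (Jp n) v) \<and>
        ?f Dd (?f (Jm n) v) - ?f (Jm n) (?f Dd v) = scale (of_int n) (?f (Jm n) v) \<and>
        ?f Dd (?f (J0 n) v) - ?f (J0 n) (?f Dd v) = scale (of_int n) (?f (J0 n) v)"
  proof (intro ballI allI conjI)
    fix v n assume v: "v \<in> A"
    show "?f Dd (?f (Jp n) v) - ?f (Jp n) (?f Dd v) = scale (of_int n) (?f (Jp n) v)"
      using br_dm[OF v, of n] by (simp add: algebra_simps)
    show "?f Dd (?f (Jm n) v) - ?f (Jm n) (?f Dd v) = scale (of_int n) (?f (Jm n) v)"
      using br_dp[OF v, of n] by (simp add: algebra_simps)
    show "?f Dd (?f (J0 n) v) - ?f (J0 n) (?f Dd v) = scale (of_int n) (?f (J0 n) v)"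
      using br_d0[OF v, of n] v by (simp add: algebra_simps)
  qed
  have c6: "\<forall>v\<in>A. \<forall>x. ?f Kc (?f x v) = ?f x (?f Kc v)"
  proof (intro ballI allI)
    fix v x assume v: "v \<in> A"
    show "?f Kc (?f x v) = ?f x (?f Kc v)"
    proof (cases x)
      case (Jp n) then show ?thesis using br_K[OF v, of "Jm n"] by simp
    next
      case (Jm n) then show ?thesis using br_K[OF v, of "Jp n"] by simp
    next
      case (J0 n) then show ?thesis using br_K[OF v, of "J0 n"] v by simp
    next
      case Kc then show ?thesis by simp
    next
      case Dd then show ?thesis using br_K[OF v, of "Dd"] by simp
    qed
  qed
  show ?thesis unfolding aff_module_def using sub c1 c2 c3 c4 c5 c6 by blast
qed

lemma hom_tw:
  assumes h: "aff_hom scale A \<rho> B \<sigma> \<phi>"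
  shows "aff_hom scale A (tw \<rho>) B (tw \<sigma>) \<phi>"
proof -
  have "\<phi> (tw \<rho> x u) = tw \<sigma> x (\<phi> u)" if u: "u \<in> A" for x u
  proof -
    have n: "\<phi> (- w) = - \<phi> w" if "w \<in> A" for w using hom_scale[OF h that, of "-1"] by simp
    show ?thesis using u by (cases x) (simp_all add: hom_act[OF h] n)
  qed
  then show ?thesis using h unfolding aff_hom_def by blast
qed

lemma gen_tw: "gen_submodule scale A (tw \<rho>) w = gen_submodule scale A \<rho> w"
proof -
  have "(\<forall>x. \<forall>v\<in>S. tw \<rho> x v \<in> S) \<longleftrightarrow> (\<forall>x. \<forall>v\<in>S. \<rho> x v \<in> S)" if S: "subspace S" for S
  proof
    assume a: "\<forall>x. \<forall>v\<in>S. tw \<rho> x v \<in> S"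
    show "\<forall>x. \<forall>v\<in>S. \<rho> x v \<in> S"
    proof (intro allI ballI)
      fix x v assume v: "v \<in> S"
      show "\<rho> x v \<in> S"
      proof (cases x)
        case (Jp n) then show ?thesis using a[rule_format, OF v, of "Jm n"] by simp
      next
        case (Jm n) then show ?thesis using a[rule_format, OF v, of "Jp n"] by simp
      next
        case (J0 n) then show ?thesis using a[rule_format, OF v, of "J0 n"] subspace_neg[OF S] by force
      next
        case Kc then show ?thesis using a[rule_format, OF v, of Kc] by simp
      next
        case Dd then show ?thesis using a[rule_format, OF v, of Dd] by simp
      qed
    qed
  next
    assume a: "\<forall>x. \<forall>v\<in>S. \<rho> x v \<in> S"
    show "\<forall>x. \<forall>v\<in>S. tw \<rho> x v \<in> S"
    proof (intro allI ballI)
      fix x v assume v: "v \<in> S"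
      show "tw \<rho> x v \<in> S" using a v subspace_neg[OF S] by (cases x) auto
    qed
  qed
  then show ?thesis unfolding gen_submodule_def by (intro arg_cong[where f = Inter] Collect_cong) blast
qed

end

lemma (in vsp) rel_tw: "rel_Dplus scale j k (tw \<rho>) e = rel_Dminus scale j k \<rho> e"
proof -
  have h: "(- a = scale (complex_of_real (2 * (real m - j))) x) \<longleftrightarrow> (a = scale (of_real (2 * (j - real m))) x)"
    for a x m
  proof -
    have e: "complex_of_real (2 * (j - real m)) = - of_real (2 * (real m - j))" by simp
    show ?thesis unfolding e scale_minus_left by (metis minus_minus)
  qed
  show ?thesis unfolding rel_Dplus_def rel_Dminus_def tw_simps h neg_equal_0_iff_equal by blast
qed

lemma rel_D0_tw: "rel_D0 scale k (tw \<sigma>) v = rel_D0 scale k \<sigma> v"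
  unfolding rel_D0_def tw_simps neg_equal_0_iff_equal by blast

lemma (in vsp) flow_tw: "spectral_flow scale s (tw \<rho>) = tw (spectral_flow scale (- s) \<rho>)"
proof (intro ext)
  fix x v show "spectral_flow scale s (tw \<rho>) x v = tw (spectral_flow scale (- s) \<rho>) x v"
    by (cases x) (simp_all add: algebra_simps)
qed

lemma (in vsp) prol_tw:
  assumes P: "is_prolongation scale A \<rho> e R" and RR: "\<And>\<tau> g. R' \<tau> g \<longleftrightarrow> R (tw \<tau>) g"
  shows "is_prolongation scale A (tw \<rho>) e R'"
proof -
  have am: "aff_module scale A \<rho>" and eA: "\<forall>i. e i \<in> A" and Re: "R \<rho> e"
    using P unfolding is_prolongation_def by blast+
  have U: "\<And>C \<tau> g. aff_module scale C \<tau> \<Longrightarrow> (\<forall>i. g i \<in> C) \<Longrightarrow> R \<tau> g \<Longrightarrow>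
        (\<exists>\<phi>. aff_hom scale A \<rho> C \<tau> \<phi> \<and> (\<forall>i. \<phi> (e i) = g i)) \<and>
        (\<forall>\<phi> \<psi>. aff_hom scale A \<rho> C \<tau> \<phi> \<and> (\<forall>i. \<phi> (e i) = g i) \<and>
                aff_hom scale A \<rho> C \<tau> \<psi> \<and> (\<forall>i. \<psi> (e i) = g i) \<longrightarrow> (\<forall>v\<in>A. \<phi> v = \<psi> v))"
    using P unfolding is_prolongation_def by blast
  interpret A1: affm scale A \<rho> by unfold_locales (rule am)
  have am2: "aff_module scale A (tw \<rho>)" by (rule A1.tw_module)
  interpret A2: affm scale A "tw \<rho>" by unfold_locales (rule am2)
  have R'e: "R' (tw \<rho>) e" using RR Re by simp
  have univ: "(\<exists>\<phi>. aff_hom scale A (tw \<rho>) C \<tau> \<phi> \<and> (\<forall>i. \<phi> (e i) = g i)) \<and>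
        (\<forall>\<phi> \<psi>. aff_hom scale A (tw \<rho>) C \<tau> \<phi> \<and> (\<forall>i. \<phi> (e i) = g i) \<and>
                aff_hom scale A (tw \<rho>) C \<tau> \<psi> \<and> (\<forall>i. \<psi> (e i) = g i) \<longrightarrow> (\<forall>v\<in>A. \<phi> v = \<psi> v))"
    if C: "aff_module scale C \<tau>" and gC: "\<forall>i. g i \<in> C" and Rg: "R' \<tau> g" for C \<tau> g
  proof -
    interpret Cm: affm scale C \<tau> by unfold_locales (rule C)
    have C2: "aff_module scale C (tw \<tau>)" by (rule Cm.tw_module)
    have Rg2: "R (tw \<tau>) g" using RR Rg by simp
    note U2 = U[OF C2 gC Rg2]
    show ?thesis
    proof (intro conjI allI impI)
      obtain \<phi> where "aff_hom scale A \<rho> C (tw \<tau>) \<phi>" "\<forall>i. \<phi> (e i) = g i" using U2 by blast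
      then show "\<exists>\<phi>. aff_hom scale A (tw \<rho>) C \<tau> \<phi> \<and> (\<forall>i. \<phi> (e i) = g i)"
        using A1.hom_tw by fastforce
    next
      fix \<phi> \<psi> assume a: "aff_hom scale A (tw \<rho>) C \<tau> \<phi> \<and> (\<forall>i. \<phi> (e i) = g i) \<and>
                aff_hom scale A (tw \<rho>) C \<tau> \<psi> \<and> (\<forall>i. \<psi> (e i) = g i)"
      then have "aff_hom scale A \<rho> C (tw \<tau>) \<phi>" "aff_hom scale A \<rho> C (tw \<tau>) \<psi>"
        using A2.hom_tw[of C \<tau>] by auto
      then show "\<forall>v\<in>A. \<phi> v = \<psi> v" using U2 a by blast
    qed
  qed
  show ?thesis unfolding is_prolongation_def using am2 eA R'e univ by blast
qed




theorem proposition3p11: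
  fixes scale :: "complex \<Rightarrow> 'u::ab_group_add \<Rightarrow> 'u" and k :: int
    and Ap Am B :: "'u set" and \<rho>p \<rho>m \<sigma> :: "gen \<Rightarrow> 'u \<Rightarrow> 'u"
    and ep em :: "nat \<Rightarrow> 'u" and v :: "unit \<Rightarrow> 'u"
  assumes "vector_space scale"
    and "k < -2"
    and "is_prolongation scale Ap \<rho>p ep (rel_Dplus scale (real_of_int k / 2) k)"
    and "is_prolongation scale Am \<rho>m em (rel_Dminus scale (real_of_int k / 2) k)"
    and "is_prolongation scale B \<sigma> v (rel_D0 scale k)"
  shows "(\<exists>\<phi>. aff_hom scale Ap \<rho>p B (spectral_flow scale 1 \<sigma>) \<phi> \<and> \<phi> ` Ap = B \<and>
             {x\<in>Ap. \<phi> x = 0} = gen_submodule scale Ap \<rho>p (\<rho>p (Jm (-1)) (ep 0)))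
       \<and> (\<exists>\<phi>. aff_hom scale Am \<rho>m B (spectral_flow scale (-1) \<sigma>) \<phi> \<and> \<phi> ` Am = B \<and>
             {x\<in>Am. \<phi> x = 0} = gen_submodule scale Am \<rho>m (\<rho>m (Jp (-1)) (em 0)))"
proof -
  note VS = assms(1) and kneg = assms(2) and PA = assms(3) and PM = assms(4) and PB = assms(5)
  interpret vsp scale using VS by (simp add: vsp_def)
  have c1: "\<exists>\<phi>. aff_hom scale Ap \<rho>p B (spectral_flow scale 1 \<sigma>) \<phi> \<and> \<phi> ` Ap = B \<and>
             {x\<in>Ap. \<phi> x = 0} = gen_submodule scale Ap \<rho>p (\<rho>p (Jm (-1)) (ep 0))"
    by (rule plus_case[OF VS kneg PA PB])
  have PM': "is_prolongation scale Am (tw \<rho>m) em (rel_Dplus scale (real_of_int k / 2) k)"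
  proof (rule prol_tw[OF PM])
    fix \<tau> :: "gen \<Rightarrow> 'u \<Rightarrow> 'u" and g :: "nat \<Rightarrow> 'u"
    show "rel_Dplus scale (real_of_int k / 2) k \<tau> g = rel_Dminus scale (real_of_int k / 2) k (tw \<tau>) g"
      using rel_tw[of "real_of_int k / 2" k "tw \<tau>" g] by simp
  qed
  have PB': "is_prolongation scale B (tw \<sigma>) v (rel_D0 scale k)"
  proof (rule prol_tw[OF PB])
    fix \<tau> :: "gen \<Rightarrow> 'u \<Rightarrow> 'u" and g :: "unit \<Rightarrow> 'u"
    show "rel_D0 scale k \<tau> g = rel_D0 scale k (tw \<tau>) g" by (simp add: rel_D0_tw)
  qed
  obtain \<phi> where h: "aff_hom scale Am (tw \<rho>m) B (spectral_flow scale 1 (tw \<sigma>)) \<phi>" and s: "\<phi> ` Am = B"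
    and kr: "{x\<in>Am. \<phi> x = 0} = gen_submodule scale Am (tw \<rho>m) (tw \<rho>m (Jm (-1)) (em 0))"
    using plus_case[OF VS kneg PM' PB'] by blast
  have amM: "aff_module scale Am \<rho>m" using PM unfolding is_prolongation_def by blast
  interpret M1: affm scale Am \<rho>m by unfold_locales (rule amM)
  interpret M2: affm scale Am "tw \<rho>m" by unfold_locales (rule M1.tw_module)
  have h2: "aff_hom scale Am \<rho>m B (spectral_flow scale (-1) \<sigma>) \<phi>"
    using M2.hom_tw[OF h] unfolding flow_tw tw_tw .
  have kr2: "{x\<in>Am. \<phi> x = 0} = gen_submodule scale Am \<rho>m (\<rho>m (Jp (-1)) (em 0))"
    using kr unfolding M1.gen_tw by simp
  show ?thesis using c1 h2 s kr2 by blast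
qed



end
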